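(* Let $m,n$ be nonnegative integers with $0\leqslant m\leqslant n$, let $\varepsilon\in\{+1,-1\}$, and let $z\in\mathbb{C}\setminus(-\infty,1]$. Then \begin{align*} \frac{\mathrm{d}^{m}}{\mathrm{d}z^{m}}\bigl[P_{n}(z)\ln(z+\varepsilon)\bigr] &= \frac{(2m)!}{2^{m}m!}C_{n-m}^{(m+1/2)}(z)\ln(z+\varepsilon) +\frac{(2m)!}{2^{m}m!}[\psi(n+m+1)-\psi(n-m+1)]C_{n-m}^{(m+1/2)}(z)\\ &\quad -\frac{\varepsilon^{n+m}}{2^{m}}\sum_{k=0}^{n-m}\varepsilon^{k}\frac{(k+n+m)!}{k!\,(k+m)!\,(n-m-k)!}\,[2\psi(k+n+m+1)-\psi(k+m+1)]\left(\frac{z-\varepsilon}{2}\right)^{k}\\ &\quad +\varepsilon^{n}\frac{(n+m)!}{(n-m)!}(z+\varepsilon)^{-m}\sum_{k=0}^{n}\varepsilon^{k}\frac{(k+n)!}{k!\,(k+m)!\,(n-k)!}\,[2\psi(k+n+1)-\psi(k+m+1)]\left(\frac{z-\varepsilon}{2}\right)^{k}. \end{align*}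
   Context: $P_n(z)$ denotes the Legendre polynomial of degree $n$. $C_{j}^{(\alpha)}(z)$ denotes the Gegenbauer (ultraspherical) polynomial of degree $j$ and parameter $\alpha$. $\psi(\zeta)=\Gamma'(\zeta)/\Gamma(\zeta)$ is the digamma function. The complex plane is cut along the real axis from $-\infty$ to $+1$; for $z\in\mathbb{C}\setminus(-\infty,1]$, $\ln(z\pm1)$ denotes the principal branch of the logarithm. The case $\varepsilon=+1$ concerns $\ln(z+1)$ and the case $\varepsilon=-1$ concerns $\ln(z-1)$. *)

theory Defs
  imports "HOL-Analysis.Analysis"
begin

definition legendreP :: "nat \<Rightarrow> complex \<Rightarrow> complex" where
  "legendreP n z = (\<Sum>k=0..n div 2.
      (-1)^k * fact (2*n - 2*k) / (2^n * fact k * fact (n - k) * fact (n - 2*k)) * z^(n - 2*k))"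

definition gegenbauerC :: "nat \<Rightarrow> complex \<Rightarrow> complex \<Rightarrow> complex" where
  "gegenbauerC j a z = (\<Sum>k=0..j div 2.
      (-1)^k * pochhammer a (j - k) / (fact k * fact (j - 2*k)) * (2*z)^(j - 2*k))"

end

theory Submission
  imports Defs "HOL-Computational_Algebra.Polynomial"
begin


definition mk :: "nat \<Rightarrow> (nat \<Rightarrow> complex) \<Rightarrow> complex poly" where
  "mk N c = (\<Sum>k\<le>N. monom (c k) k)"

lemma coeff_mk: "coeff (mk N c) i = (if i \<le> N then c i else 0)"
  unfolding mk_def by (simp add: coeff_sum coeff_monom)

lemma poly_mk: "poly (mk N c) x = (\<Sum>k\<le>N. c k * x ^ k)"
  unfolding mk_def by (simp add: poly_sum poly_monom)

lemma coeff_pCons': "coeff (pCons 0 p) i = (if i = 0 then 0 else coeff p (i - 1))"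
  by (cases i) auto



lemma ofnat_ne0 [simp]:
  "(of_nat k + 1 :: complex) \<noteq> 0" "(1 + of_nat k :: complex) \<noteq> 0"
  "(of_nat k + numeral w :: complex) \<noteq> 0" "(numeral w + of_nat k :: complex) \<noteq> 0"
proof -
  have a: "(of_nat k + 1 :: complex) = of_nat (k + 1)" "(of_nat k + numeral w :: complex) = of_nat (k + numeral w)"
    by simp_all
  show "(of_nat k + 1 :: complex) \<noteq> 0" unfolding a of_nat_eq_0_iff by simp
  then show "(1 + of_nat k :: complex) \<noteq> 0" by (simp add: add.commute)
  show "(of_nat k + numeral w :: complex) \<noteq> 0" unfolding a of_nat_eq_0_iff by simp
  then show "(numeral w + of_nat k :: complex) \<noteq> 0" by (simp add: add.commute)
qed

definition la :: "nat \<Rightarrow> nat \<Rightarrow> complex" where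
  "la n k = (-1)^k * fact (2*n - 2*k) / (2^n * fact k * fact (n - k) * fact (n - 2*k))"

definition Lp :: "nat \<Rightarrow> complex poly" where
  "Lp n = (\<Sum>k=0..n div 2. monom (la n k) (n - 2*k))"

lemma poly_Lp: "poly (Lp n) z = legendreP n z"
  unfolding Lp_def legendreP_def la_def by (simp add: poly_sum poly_monom)

lemma idx_aux: "(k::nat) \<in> {0..(n::nat) div 2} \<Longrightarrow> (n - 2*k = i) = (k = (n-i) div 2 \<and> i \<le> n \<and> even (n-i))"
  by auto

lemma coeff_Lp: "coeff (Lp n) i = (if i \<le> n \<and> even (n - i) then la n ((n - i) div 2) else 0)"
proof -
  have "coeff (Lp n) i = (\<Sum>k=0..n div 2. if n - 2*k = i then la n k else 0)"
    unfolding Lp_def by (simp add: coeff_sum coeff_monom)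
  also have "\<dots> = (\<Sum>k=0..n div 2. if k = (n - i) div 2 \<and> (i \<le> n \<and> even (n - i)) then la n k else 0)"
    by (rule sum.cong) (simp_all add: idx_aux)
  also have "\<dots> = (if i \<le> n \<and> even (n - i) then la n ((n - i) div 2) else 0)"
  proof (cases "i \<le> n \<and> even (n - i)")
    case True
    then have "(n - i) div 2 \<in> {0..n div 2}" by auto
    then show ?thesis using True by (simp add: sum.delta')
  next
    case False
    then have z0: "(if k = (n-i) div 2 \<and> i \<le> n \<and> even (n-i) then la n k else 0) = 0" for k by auto
    then show ?thesis unfolding z0 if_not_P[OF False] by simp
  qed
  finally show ?thesis .
qed

definition Lz :: "nat \<Rightarrow> complex poly \<Rightarrow> complex poly" where
  "Lz n p = pderiv (pderiv p) - pCons 0 (pCons 0 (pderiv (pderiv p))) - smult 2 (pCons 0 (pderiv p))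
     + smult (of_nat (n*(n+1))) p"

lemma coeff_Lz: "coeff (Lz n p) j = of_nat ((j+1)*(j+2)) * coeff p (j+2)
   + (of_nat (n*(n+1)) - of_nat (j*(j+1))) * coeff p j"
proof (cases j)
  case 0 then show ?thesis by (simp add: Lz_def coeff_pderiv algebra_simps numeral_2_eq_2)
next
  case (Suc j') then show ?thesis
    by (cases j') (simp_all add: Lz_def coeff_pderiv algebra_simps numeral_2_eq_2)
qed

lemma Lz_unique:
  assumes "Lz n p = 0" "\<And>k. k \<ge> n \<Longrightarrow> coeff p k = 0"
  shows "p = 0"
proof -
  have "\<forall>j. n - j \<le> d \<longrightarrow> coeff p j = 0" for d
  proof (induction d)
    case 0 then show ?case using assms(2) by auto
  next
    case (Suc d)
    show ?case
    proof (intro allI impI)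
      fix j assume j: "n - j \<le> Suc d"
      show "coeff p j = 0"
      proof (cases "j \<ge> n")
        case True then show ?thesis using assms(2) by auto
      next
        case False
        have "coeff p (j+2) = 0" using Suc.IH j False by auto
        moreover have "coeff (Lz n p) j = 0" using assms(1) by simp
        ultimately have "(of_nat (n*(n+1)) - of_nat (j*(j+1)) :: complex) * coeff p j = 0"
          by (simp add: coeff_Lz)
        moreover have "j*(j+1) < n*(n+1)" using False by (intro mult_strict_mono) auto
        then have "(of_nat (n*(n+1)) - of_nat (j*(j+1)) :: complex) \<noteq> 0"
          by (metis eq_iff_diff_eq_0 less_irrefl of_nat_eq_iff)
        ultimately show ?thesis by simp
      qed
    qed
  qed
  note * = this
  show ?thesis
  proof (intro poly_eqI)
    fix j show "coeff p j = coeff 0 j" using *[of "n - j"] by simp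
  qed
qed

lemma la_step:
  "of_nat ((i+1)*(i+2)) * la (i + 2*t + 2) t + (of_nat ((i + 2*t + 2)*(i + 2*t + 2 + 1)) - of_nat (i*(i+1))) * la (i + 2*t + 2) (t+1) = 0"
proof -
  define n where "n = i + 2*t + 2"
  define X :: complex where "X = (-1)^t * fact (2*i+2*t+2) / (2^n * fact t * fact (i+t+1) * fact i)"
  have e1: "2*n - 2*(t+1) = 2*i + 2*t + 2" "2*n - 2*t = Suc (Suc (2*i+2*t+2))"
     "n - (t+1) = i + t + 1" "n - t = Suc (i+t+1)" "n - 2*(t+1) = i" "n - 2*t = Suc (Suc i)"
    by (auto simp: n_def)
  have f1: "(fact (Suc (Suc (2*i+2*t+2))) :: complex) = (2 * (of_nat (i + t) + 2)) * (2 * of_nat i + 2 * of_nat t + 3) * fact (2*i+2*t+2)"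
    by (simp add: algebra_simps)
  have f2: "(fact (Suc (i+t+1)) :: complex) = (of_nat (i + t) + 2) * fact (i+t+1)"
    by (simp add: algebra_simps)
  have f3: "(fact (Suc (Suc i)) :: complex) = (of_nat i + 2) * (of_nat i + 1) * fact i"
    by (simp add: algebra_simps)
  have f4: "(fact (t+1) :: complex) = (of_nat t + 1) * fact t"
    by (simp add: algebra_simps)
  have A: "la n t = X * (2 * (2 * of_nat i + 2 * of_nat t + 3)) / ((of_nat i + 2) * (of_nat i + 1))"
  proof -
    have key: "s * ((2*q)*c*F1) / (P*T*(q*F2)*(r*u*F3))
       = s*F1/(P*T*F2*F3) * (2*c) / (r*u)"
      if "F2\<noteq>0" "F3\<noteq>0" "T\<noteq>0" "P\<noteq>0" "q \<noteq> 0" "r\<noteq>0" "u\<noteq>0"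
      for F1 F2 F3 T P s q c r u :: complex
      using that by (simp add: field_simps)
    show ?thesis
      unfolding la_def e1 X_def f1 f2 f3
      by (rule key) (simp_all del: of_nat_add)
  qed
  have B: "la n (t+1) = - X / (of_nat t + 1)"
  proof -
    have key: "(-1)^(t+1) * F1 / (P*(a*T)*F2*F3) = - ((-1)^t * F1 / (P*T*F2*F3)) / a"
      if "F2\<noteq>0" "F3\<noteq>0" "T\<noteq>0" "P\<noteq>0" "a\<noteq>0"
      for F1 F2 F3 T P a :: complex
      using that by (simp add: field_simps)
    show ?thesis
      unfolding la_def e1 X_def f4
      by (rule key) (simp_all del: of_nat_add)
  qed
  have C: "(of_nat (n*(n+1)) - of_nat (i*(i+1)) :: complex) = (2 * of_nat t + 2) * (2 * of_nat i + 2 * of_nat t + 3)"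
    unfolding n_def by (simp add: algebra_simps)
  have k2: "u*r*(X*(2*c)/(r*u)) + (2 * v + 2) * c*(-X/(v+1)) = 0" if "r\<noteq>0" "u\<noteq>0" "v+1\<noteq>0" for X c r u v::complex
    using that by (simp add: field_simps)
  have D: "(of_nat ((i+1)*(i+2)) :: complex) = (of_nat i + 1) * (of_nat i + 2)" by (simp add: algebra_simps)
  show ?thesis unfolding n_def[symmetric] A B C D
    by (rule k2) simp_all
qed

lemma Lz_Lp: "Lz n (Lp n) = 0"
proof (intro poly_eqI)
  fix i
  show "coeff (Lz n (Lp n)) i = coeff 0 i"
  proof (cases "i < n \<and> even (n - i)")
    case True
    then have "even (n - i)" by blast
    then obtain d where d: "n - i = 2*d" by (rule evenE)
    with True have "d > 0" by (cases d) auto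
    define t where "t = d - 1"
    have n: "n = i + 2*t + 2" using d True \<open>d > 0\<close> unfolding t_def by auto
    have c1: "coeff (Lp n) i = la n (t+1)" using n by (simp add: coeff_Lp)
    have c2: "coeff (Lp n) (i+2) = la n t" using n by (simp add: coeff_Lp)
    show ?thesis unfolding coeff_Lz c1 c2 using la_step[of i t] n by simp
  next
    case False
    then have "\<not> (i+2 \<le> n \<and> even (n - (i+2)))" "i = n \<or> \<not> (i \<le> n \<and> even (n - i))"
      by presburger+
    then have "coeff (Lp n) (i+2) = 0 \<and> (i = n \<or> coeff (Lp n) i = 0)"
      unfolding coeff_Lp by auto
    then show ?thesis by (auto simp: coeff_Lz)
  qed
qed



definition uc :: "nat \<Rightarrow> complex \<Rightarrow> nat \<Rightarrow> nat \<Rightarrow> complex" where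
  "uc n e m k = e^k * fact (k+n) / (fact k * fact (k+m) * fact (n-k))"

definition U :: "nat \<Rightarrow> complex \<Rightarrow> nat \<Rightarrow> complex poly" where
  "U n e m = mk n (uc n e m)"

lemma uc_Suc:
  assumes "k < n"
  shows "uc n e m (Suc k) = e * uc n e m k * of_nat (n-k) * of_nat (n+k+1) / (of_nat (k+1) * of_nat (k+m+1))"
proof -
  have f1: "(fact (Suc k + n) :: complex) = of_nat (n+k+1) * fact (k+n)" by (simp add: algebra_simps)
  have f2: "(fact (Suc k) :: complex) = of_nat (k+1) * fact k" by simp
  have f3: "(fact (Suc k + m) :: complex) = of_nat (k+m+1) * fact (k+m)" by (simp add: algebra_simps)
  have f4: "(fact (n - k) :: complex) = of_nat (n-k) * fact (n - Suc k)"
    using assms by (metis Suc_diff_Suc fact_Suc)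
  have key: "e^(Suc k) * (A*Fa) / ((B*Fb)*(C*Fc)*Fd) = e * (e^k*Fa/(Fb*Fc*(D*Fd))) * D * A / (B*C)"
    if "Fb\<noteq>0" "Fc\<noteq>0" "Fd\<noteq>0" "B\<noteq>0" "C\<noteq>0" "D\<noteq>0" for A B C D Fa Fb Fc Fd :: complex
    using that by (simp add: field_simps)
  show ?thesis unfolding uc_def f1 f2 f3 f4
    by (rule key) (use assms in \<open>simp_all del: of_nat_add\<close>)
qed

lemma uc_Sucm: "uc n e (Suc m) k = uc n e m k / of_nat (k+m+1)"
proof -
  have f3: "(fact (k + Suc m) :: complex) = of_nat (k+m+1) * fact (k+m)" by (simp add: algebra_simps)
  show ?thesis unfolding uc_def f3 by (simp add: field_simps del: of_nat_add)
qed

definition Mx :: "nat \<Rightarrow> complex \<Rightarrow> complex poly \<Rightarrow> complex poly" where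
  "Mx n e q = smult (of_nat (n*(n+1))) q - pCons 0 (pCons 0 (pderiv (pderiv q)))
     - smult e (pCons 0 (pderiv (pderiv q))) - smult 2 (pCons 0 (pderiv q)) - smult e (pderiv q)"

lemma coeff_Mx: "coeff (Mx n e q) k = (of_nat (n*(n+1)) - of_nat (k*(k+1))) * coeff q k
   - e * of_nat ((k+1)*(k+1)) * coeff q (k+1)"
proof (cases k)
  case 0 then show ?thesis by (simp add: Mx_def coeff_pderiv algebra_simps)
next
  case (Suc j) then show ?thesis
    by (cases j) (simp_all add: Mx_def coeff_pderiv algebra_simps numeral_2_eq_2)
qed

lemma poly_Mx: "poly (Mx n e q) x = of_nat (n*(n+1)) * poly q x - x*x*poly (pderiv (pderiv q)) x
   - e*x*poly (pderiv (pderiv q)) x - 2*x*poly (pderiv q) x - e * poly (pderiv q) x"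
  by (simp add: Mx_def algebra_simps)

lemma Mx_U0:
  assumes e2: "e*e = 1"
  shows "Mx n e (U n e 0) = 0"
proof (intro poly_eqI)
  fix k
  show "coeff (Mx n e (U n e 0)) k = coeff 0 k"
  proof (cases "k < n")
    case True
    have r: "uc n e 0 (Suc k) = e * uc n e 0 k * of_nat (n-k) * of_nat (n+k+1) / (of_nat (k+1) * of_nat (k+1))"
      using uc_Suc[OF True, of e 0] by simp
    have d: "(of_nat (n-k) :: complex) = of_nat n - of_nat k" using True by (simp add: of_nat_diff)
    have nn: "(of_nat (n*(n+1)) - of_nat (k*(k+1)) :: complex) = of_nat (n-k) * of_nat (n+k+1)"
      using True by (simp add: of_nat_diff algebra_simps)
    have kk: "(of_nat ((k+1)*(k+1)) :: complex) = of_nat (k+1) * of_nat (k+1)" by (simp add: algebra_simps)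
    have key: "D*E*u - e*(K*K)*(e*u*D*E/(K*K)) = 0" if "K \<noteq> 0" for D E u K :: complex
      using that e2 by (simp add: field_simps)
    have "coeff (Mx n e (U n e 0)) k = 0"
      unfolding coeff_Mx U_def coeff_mk nn kk using True
      by (simp only: if_True Suc_eq_plus1[symmetric] less_eq_Suc_le r less_imp_le) (rule key, simp)
    then show ?thesis by simp
  next
    case False
    then show ?thesis unfolding coeff_Mx U_def coeff_mk by auto
  qed
qed

lemma pderiv_lin: "pderiv (pcompose p [:a,b:]) = smult b (pcompose (pderiv p) [:a,b:])"
  by (simp add: pderiv_pcompose pderiv_pCons)

definition Xp :: "nat \<Rightarrow> complex \<Rightarrow> complex poly" where
  "Xp n e = smult (e^n) (pcompose (U n e 0) [:-e/2, 1/2:])"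

lemma Lz_Xp:
  assumes e2: "e*e = 1"
  shows "Lz n (Xp n e) = 0"
proof -
  have l: "poly [:-e/2, 1/2:] y = (y-e)/2" for y by (simp add: field_simps)
  have p0: "poly (Xp n e) y = e^n * poly (U n e 0) ((y-e)/2)" for y
    unfolding Xp_def poly_smult poly_pcompose l ..
  have p1: "poly (pderiv (Xp n e)) y = e^n * (1/2 * poly (pderiv (U n e 0)) ((y-e)/2))" for y
    unfolding Xp_def pderiv_smult pderiv_lin poly_smult poly_pcompose l ..
  have p2: "poly (pderiv (pderiv (Xp n e))) y = e^n * (1/2 * (1/2 * poly (pderiv (pderiv (U n e 0))) ((y-e)/2)))" for y
    unfolding Xp_def pderiv_smult pderiv_lin poly_smult poly_pcompose l ..
  have ee: "e * (e * w) = w" for w using e2 by (metis mult.assoc mult_1)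
  have *: "poly (Lz n (Xp n e)) (2*x+e) = e^n * poly (Mx n e (U n e 0)) x" for x
  proof -
    have "poly (Lz n (Xp n e)) (2*x+e) = poly (pderiv (pderiv (Xp n e))) (2*x+e)
       - (2*x+e)*((2*x+e)* poly (pderiv (pderiv (Xp n e))) (2*x+e)) - 2 * ((2*x+e) * poly (pderiv (Xp n e)) (2*x+e))
       + of_nat (n*(n+1)) * poly (Xp n e) (2*x+e)"
      by (simp add: Lz_def)
    also have "\<dots> = e^n * poly (Mx n e (U n e 0)) x"
      unfolding p0 p1 p2 poly_Mx using e2 by (simp add: field_simps ee)
    finally show ?thesis .
  qed
  have "poly (Lz n (Xp n e)) z = e^n * poly (Mx n e (U n e 0)) ((z-e)/2)" for z
    using *[of "(z-e)/2"] by (simp add: field_simps)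
  then show ?thesis using Mx_U0[OF e2] poly_all_0_iff_0 by auto
qed

lemma degree_mk: "degree (mk N c) \<le> N"
  by (rule degree_le) (simp add: coeff_mk)

lemma coeff_lin_comp:
  fixes p :: "complex poly"
  assumes "degree p \<le> N" "b \<noteq> 0"
  shows "coeff (pcompose p [:a,b:]) N = coeff p N * b^N"
proof (cases "degree p = N")
  case True
  have "degree (pcompose p [:a,b:]) = N" using True assms by (simp add: degree_pcompose)
  then show ?thesis using lead_coeff_comp[of "[:a,b:]" p] True assms by simp
next
  case False
  then have "degree p < N" using assms by simp
  moreover have "degree (pcompose p [:a,b:]) < N"
    using degree_pcompose_le[of p "[:a,b:]"] \<open>degree p < N\<close> assms by simp
  ultimately show ?thesis by (simp add: coeff_eq_0)
qed

lemma coeff_lin_comp_gt: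
  fixes p :: "complex poly"
  assumes "degree p \<le> N" "N < k"
  shows "coeff (pcompose p [:a,b:]) k = 0"
proof -
  have "degree (pcompose p [:a,b:]) \<le> N"
    using degree_pcompose_le[of p "[:a,b:]"] assms by (cases "b = 0") auto
  then show ?thesis using assms by (simp add: coeff_eq_0)
qed

lemma Lp_eq_Xp:
  assumes e2: "e*e = 1"
  shows "Lp n = Xp n e"
proof -
  have dU: "degree (U n e 0) \<le> n" unfolding U_def by (rule degree_mk)
  have dL: "degree (Lp n) \<le> n" by (rule degree_le) (simp add: coeff_Lp)
  have "Lz n (Lp n - Xp n e) = 0"
  proof -
    have "Lz n (Lp n - Xp n e) = Lz n (Lp n) - Lz n (Xp n e)"
      by (intro poly_eqI) (simp add: coeff_Lz algebra_simps)
    then show ?thesis using Lz_Lp Lz_Xp[OF e2] by simp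
  qed
  moreover have "coeff (Lp n - Xp n e) k = 0" if "k \<ge> n" for k
  proof (cases "k = n")
    case True
    have en: "e^n * e^n = 1" using e2 by (metis power_mult_distrib power_one)
    have cc: "coeff (pcompose (U n e 0) [:-e/2,1/2:]) n = coeff (U n e 0) n * (1/2)^n"
      by (rule coeff_lin_comp[OF dU]) simp
    have "coeff (Xp n e) n = e^n * (uc n e 0 n * (1/2)^n)"
      unfolding Xp_def coeff_smult cc by (simp add: U_def coeff_mk)
    also have "\<dots> = la n 0"
      unfolding uc_def la_def using en
      by (simp add: field_simps flip: mult.assoc) (simp add: mult_2_right)
    finally show ?thesis using True by (simp add: coeff_Lp)
  next
    case False
    then have "n < k" using that by simp
    then show ?thesis using coeff_lin_comp_gt[OF dU \<open>n < k\<close>] dL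
      by (simp add: Xp_def coeff_eq_0)
  qed
  ultimately have "Lp n - Xp n e = 0" by (rule Lz_unique)
  then show ?thesis by simp
qed

lemma F1:
  assumes e2: "e*e = 1"
  shows "legendreP n z = e^n * poly (U n e 0) ((z-e)/2)"
proof -
  have l: "poly [:-e/2, 1/2:] z = (z-e)/2" by (simp add: field_simps)
  show ?thesis
    unfolding poly_Lp[symmetric] Lp_eq_Xp[OF e2] Xp_def poly_smult poly_pcompose l ..
qed



lemma pderiv_sum: "pderiv (\<Sum>k\<in>A. p k) = (\<Sum>k\<in>A. pderiv (p k))"
  by (induction A rule: infinite_finite_induct) (auto simp: pderiv_add)

lemma pderivs_sum: "(pderiv^^m) (\<Sum>k\<in>A. p k) = (\<Sum>k\<in>A. (pderiv^^m) (p k))"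
  by (induction m) (auto simp: pderiv_sum)

lemma pderivs_monom: "(pderiv^^m) (monom c d) = monom (c * of_nat (\<Prod>i<m. d - i)) (d - m)"
proof (induction m)
  case 0 then show ?case by simp
next
  case (Suc m)
  have "d - m - 1 = d - Suc m" by simp
  then show ?case using Suc
    by (simp only: funpow.simps comp_def pderiv_monom prod.lessThan_Suc of_nat_mult) (simp add: ac_simps)
qed

lemma prod_fact_nat: "m \<le> d \<Longrightarrow> (\<Prod>i<m. d - i) * fact (d - m) = (fact d :: nat)"
proof (induction m)
  case 0 then show ?case by simp
next
  case (Suc m)
  obtain k where k: "d - m = Suc k" using Suc.prems by (metis Suc_diff_le diff_Suc_Suc)
  then have k2: "d - Suc m = k" by simp
  have "fact (d - m) = (d - m) * (fact (d - Suc m) :: nat)" unfolding k k2 by simp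
  then show ?case using Suc by (simp add: prod.lessThan_Suc mult.assoc)
qed

lemma prod_fact: "m \<le> d \<Longrightarrow> (of_nat (\<Prod>i<m. d - i) :: complex) = fact d / fact (d - m)"
proof -
  assume "m \<le> d"
  then have "(of_nat ((\<Prod>i<m. d - i) * fact (d - m)) :: complex) = of_nat (fact d)"
    using prod_fact_nat by metis
  then have "(of_nat (\<Prod>i<m. d - i) :: complex) * fact (d - m) = fact d"
    by (simp only: of_nat_mult of_nat_fact)
  then show ?thesis by (simp add: field_simps)
qed

lemma poch_half: "pochhammer (1/2::complex) N = fact (2*N) / (4^N * fact N)"
proof (induction N)
  case 0 then show ?case by simp
next
  case (Suc N)
  have f: "(fact (2 * Suc N) :: complex) = (2 * of_nat N + 2) * (2 * of_nat N + 1) * fact (2*N)"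
    by (simp add: algebra_simps)
  have f2: "(fact (Suc N) :: complex) = (of_nat N + 1) * fact N" by simp
  have key0: "(1/2 + a) * (F/(Q*G)) = (2*a+2)*(2*a+1)*F/((4*Q)*(b*G))"
    if "Q \<noteq> 0" "G \<noteq> 0" "b \<noteq> 0" "a = b - 1" for a b F G Q :: complex
    using that(1-3) unfolding that(4) by (simp add: field_simps)
  have key: "(1/2 + a) * (F/(Q*G)) = (2*a+2)*(2*a+1)*F/((4*Q)*((a+1)*G))"
    if "Q \<noteq> 0" "G \<noteq> 0" "a+1 \<noteq> 0" for a F G Q :: complex
    using key0[of Q G "a+1" a F] that by simp
  show ?case unfolding pochhammer_rec' Suc f f2 power_Suc by (rule key) simp_all
qed

lemma poch_mhalf: "pochhammer (of_nat m + 1/2 :: complex) N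
   = fact (2*(m+N)) * 4^m * fact m / (4^(m+N) * fact (m+N) * fact (2*m))"
proof -
  have "pochhammer (1/2::complex) (m + N) = pochhammer (1/2) m * pochhammer (1/2 + of_nat m) N"
    by (rule pochhammer_product')
  moreover have "pochhammer (1/2::complex) m \<noteq> 0" unfolding poch_half by simp
  ultimately have "pochhammer (of_nat m + 1/2 :: complex) N = pochhammer (1/2) (m+N) / pochhammer (1/2) m"
    by (simp add: field_simps add.commute)
  then show ?thesis unfolding poch_half by (simp add: field_simps)
qed

lemma four: "(4::complex)^j = 2^j * 2^j"
  by (simp flip: power_mult_distrib)

lemma F3_term:
  assumes "2*k \<le> n - m" "m \<le> n"
  shows "la n k * of_nat (\<Prod>i<m. n - 2*k - i) * z^(n - 2*k - m)
    = fact (2*m) / (2^m * fact m) * ((-1)^k * pochhammer (of_nat m + 1/2) (n - m - k) / (fact k * fact (n - m - 2*k)) * (2*z)^(n - m - 2*k))"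
proof -
  define r where "r = n - m - 2*k"
  have n: "n = m + r + 2*k" using assms unfolding r_def by simp
  have e1: "2*n - 2*k = 2*(m+r+k)" "n - k = m+r+k" "n - 2*k = m + r" "n - 2*k - m = r"
     "n - m - k = r + k" "n - m - 2*k = r"
    using n by auto
  have pw: "(2::complex)^n = 2^m * 2^r * (2^k * 2^k)"
    unfolding n by (simp add: power_add power_mult_distrib mult_2 mult.assoc)
  have pw4: "(4::complex)^m = 2^m * 2^m" "(4::complex)^(m+(r+k)) = 2^m * 2^m * (2^r * 2^r) * (2^k * 2^k)"
    using four[of m] four[of r] four[of k] by (simp_all add: power_add)
  have L: "la n k = (-1)^k * fact (2*(m+r+k)) / (2^m * 2^r * (2^k * 2^k) * fact k * fact (m+r+k) * fact (m+r))"
    unfolding la_def e1 pw ..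
  have Pr: "(of_nat (\<Prod>i<m. m + r - i) :: complex) = fact (m+r) / fact r"
    using prod_fact[of m "m+r"] by simp
  have Po: "pochhammer (of_nat m + 1/2 :: complex) (r + k) = fact (2*(m+r+k)) * (2^m * 2^m) * fact m
      / ((2^m * 2^m * (2^r * 2^r) * (2^k * 2^k)) * fact (m+r+k) * fact (2*m))"
    using poch_mhalf[of m "r+k"] unfolding pw4 by (simp add: add.assoc)
  have key: "s*A/(P*Q*(S*S)*Kf*B*C) * (C/R) * Z = M2/(P*M) * (s*(A*(P*P)*M/((P*P*(Q*Q)*(S*S))*B*M2))/(Kf*R) * (Q*Z))"
    if "P\<noteq>0" "Q\<noteq>0" "S\<noteq>0" "Kf\<noteq>0" "B\<noteq>0" "C\<noteq>0" "R\<noteq>0" "M\<noteq>0" "M2\<noteq>0"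
    for s A P Q S Kf B C R M M2 Z :: complex
    using that by (simp add: field_simps)
  show ?thesis
    unfolding e1 L Pr Po power_mult_distrib add_diff_cancel_left'
    by (rule key) simp_all
qed

lemma F3:
  assumes "m \<le> n"
  shows "poly ((pderiv^^m) (Lp n)) z = fact (2*m) / (2^m * fact m) * gegenbauerC (n - m) (of_nat m + 1/2) z"
proof -
  let ?f = "\<lambda>k. la n k * of_nat (\<Prod>i<m. n - 2*k - i) * z^(n - 2*k - m)"
  have "poly ((pderiv^^m) (Lp n)) z = (\<Sum>k=0..n div 2. ?f k)"
    unfolding Lp_def pderivs_sum pderivs_monom poly_sum poly_monom by (simp add: mult.assoc)
  also have "\<dots> = (\<Sum>k=0..(n-m) div 2. ?f k)"
  proof (rule sum.mono_neutral_right)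
    show "\<forall>k\<in>{0..n div 2} - {0..(n-m) div 2}. ?f k = 0"
    proof
      fix k assume k: "k \<in> {0..n div 2} - {0..(n-m) div 2}"
      then have "n - 2*k < m" "2*k \<le> n" by auto
      then have "(\<Prod>i<m. n - 2*k - i) = 0"
        by (subst prod_zero_iff) (auto intro!: bexI[of _ "n - 2*k"])
      then show "?f k = 0" by simp
    qed
  qed auto
  also have "\<dots> = (\<Sum>k=0..(n-m) div 2. fact (2*m) / (2^m * fact m) * ((-1)^k * pochhammer (of_nat m + 1/2) (n - m - k) / (fact k * fact (n - m - 2*k)) * (2*z)^(n - m - 2*k)))"
    apply (rule sum.cong[OF refl])
    apply (rule F3_term)
    using assms by auto
  also have "\<dots> = fact (2*m) / (2^m * fact m) * gegenbauerC (n - m) (of_nat m + 1/2) z"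
    unfolding gegenbauerC_def sum_distrib_left ..
  finally show ?thesis .
qed



lemma ofnat_ne0' [simp]: "(of_nat a + of_nat b + 1 :: complex) \<noteq> 0"
  by (metis of_nat_add ofnat_ne0(1))

lemma cancel3: "X \<noteq> 0 \<Longrightarrow> X * Y * (u / X) = Y * (u::complex)"
  by simp

lemma Dg_Suc: "Digamma (of_nat (Suc (Suc j)) :: complex) = Digamma (of_nat (Suc j)) + 1 / of_nat (Suc j)"
proof -
  have "(of_nat (Suc (Suc j)) :: complex) = of_nat (Suc j) + 1" by simp
  then show ?thesis using Digamma_plus1[of "of_nat (Suc j) :: complex"] by (simp del: of_nat_Suc)
qed

lemma UG_poly:
  assumes e2: "e*e = 1" and mn: "m < n"
  shows "pCons 0 (pderiv (U n e m)) + smult e (pderiv (U n e m)) - smult (of_nat m) (U n e m)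
    = smult (of_nat ((n+m+1)*(n-m))) (U n e (Suc m))"
proof (intro poly_eqI)
  fix k
  have c0: "coeff (pCons 0 (pderiv (U n e m))) k = of_nat k * coeff (U n e m) k"
    by (cases k) (simp_all add: coeff_pderiv)
  show "coeff (pCons 0 (pderiv (U n e m)) + smult e (pderiv (U n e m)) - smult (of_nat m) (U n e m)) k =
        coeff (smult (of_nat ((n+m+1)*(n-m))) (U n e (Suc m))) k"
  proof (cases "k < n")
    case True
    have key: "K*u + e*(K+1)*(e*u*(N-K)*(N+K+1)/((K+1)*(K+M+1))) - M*u = (N+M+1)*(N-M)*(u/(K+M+1))"
      if "K+1 \<noteq> 0" "K+M+1 \<noteq> 0" for K M N u :: complex
    proof -
      have ee: "e * (e * w) = w" for w using e2 by (metis mult.assoc mult_1)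
      have k0: "K*u + e*D1*(e*u*(N-K)*(N+K+1)/(D1*D2)) - M*u = (N+M+1)*(N-M)*(u/D2)"
        if "D1 \<noteq> 0" "D2 \<noteq> 0" "K = D1 - 1" "M = D2 - D1" for D1 D2 K M
        using that(1,2) unfolding that(3,4) by (simp add: field_simps ee)
      show ?thesis using k0[of "K+1" "K+M+1" K M] that by simp
    qed
    have lhs: "coeff (pCons 0 (pderiv (U n e m)) + smult e (pderiv (U n e m)) - smult (of_nat m) (U n e m)) k
       = of_nat k * uc n e m k + e * (of_nat k + 1) * uc n e m (Suc k) - of_nat m * uc n e m k"
      unfolding coeff_add coeff_diff coeff_smult c0 unfolding coeff_pderiv U_def coeff_mk using True
      by (simp add: algebra_simps)
    have rhs: "coeff (smult (of_nat ((n+m+1)*(n-m))) (U n e (Suc m))) k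
       = (of_nat n + of_nat m + 1) * (of_nat n - of_nat m) * (uc n e m k / (of_nat k + of_nat m + 1))"
      unfolding coeff_smult U_def coeff_mk uc_Sucm using True mn by (simp add: of_nat_diff) (simp add: algebra_simps)
    have u1: "uc n e m (Suc k) = e * uc n e m k * (of_nat n - of_nat k) * (of_nat n + of_nat k + 1) / ((of_nat k + 1) * (of_nat k + of_nat m + 1))"
      unfolding uc_Suc[OF True] using True by (simp add: of_nat_diff ac_simps)
    show ?thesis unfolding lhs rhs u1 by (rule key) simp_all
  next
    case False
    show ?thesis
    proof (cases "k = n")
      case True
      have lhs: "coeff (pCons 0 (pderiv (U n e m)) + smult e (pderiv (U n e m)) - smult (of_nat m) (U n e m)) k
         = (of_nat n - of_nat m) * uc n e m n"
        unfolding coeff_add coeff_diff coeff_smult c0 unfolding coeff_pderiv U_def coeff_mk using True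
        by (simp add: algebra_simps)
      have rhs: "coeff (smult (of_nat ((n+m+1)*(n-m))) (U n e (Suc m))) k
         = (of_nat n + of_nat m + 1) * (of_nat n - of_nat m) * (uc n e m n / (of_nat n + of_nat m + 1))"
        unfolding coeff_smult U_def coeff_mk uc_Sucm
        by (simp only: True le_refl if_True of_nat_mult of_nat_add of_nat_1 of_nat_diff[OF less_imp_le[OF mn]])
      show ?thesis unfolding lhs rhs by (rule cancel3[symmetric]) simp
    next
      case False
      then have "k > n" using \<open>\<not> k < n\<close> by simp
      then show ?thesis
        unfolding coeff_add coeff_diff coeff_smult c0 unfolding coeff_pderiv U_def coeff_mk by simp
    qed
  qed
qed

definition PP :: "nat \<Rightarrow> nat \<Rightarrow> complex poly" where
  "PP n m = (pderiv^^m) (Lp n)"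

definition cm :: "nat \<Rightarrow> complex \<Rightarrow> nat \<Rightarrow> complex" where
  "cm n e m = e^n * fact (n+m) / fact (n-m)"

lemma PP_Suc: "PP n (Suc m) = pderiv (PP n m)"
  unfolding PP_def by simp

lemma cm_Suc: "m < n \<Longrightarrow> cm n e (Suc m) = cm n e m * of_nat ((n+m+1)*(n-m))"
proof -
  assume mn: "m < n"
  have f1: "(fact (n + Suc m) :: complex) = of_nat (n+m+1) * fact (n+m)" by simp
  have "n - m = Suc (n - Suc m)" using mn by simp
  then have f2: "(fact (n - m) :: complex) = of_nat (n-m) * fact (n - Suc m)" by (metis fact_Suc)
  have "(of_nat (n-m) :: complex) \<noteq> 0" using mn by simp
  then show ?thesis unfolding cm_def f1 f2 by (simp add: field_simps)
qed

lemma G: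
  assumes e2: "e*e = 1"
  shows "m \<le> n \<Longrightarrow> (z+e)^m * poly (PP n m) z = cm n e m * poly (U n e m) ((z-e)/2)"
proof (induction m arbitrary: z)
  case 0
  then show ?case using F1[OF e2, of n z] by (simp add: PP_def cm_def poly_Lp)
next
  case (Suc m)
  then have mn: "m < n" by simp
  have IH: "(\<lambda>z. (z+e)^m * poly (PP n m) z) = (\<lambda>z. cm n e m * poly (U n e m) ((z-e)/2))"
    using Suc by auto
  have d1: "((\<lambda>z. (z+e)^m * poly (PP n m) z) has_field_derivative
      of_nat m * (z+e)^(m-1) * poly (PP n m) z + (z+e)^m * poly (PP n (Suc m)) z) (at z)"
    unfolding PP_Suc by (auto intro!: derivative_eq_intros)
  have d2: "((\<lambda>z. cm n e m * poly (U n e m) ((z-e)/2)) has_field_derivative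
      cm n e m * (poly (pderiv (U n e m)) ((z-e)/2) * (1/2))) (at z)"
    by (auto intro!: derivative_eq_intros DERIV_chain2[OF poly_DERIV])
  have eq: "of_nat m * (z+e)^(m-1) * poly (PP n m) z + (z+e)^m * poly (PP n (Suc m)) z
      = cm n e m * (poly (pderiv (U n e m)) ((z-e)/2) * (1/2))"
    using DERIV_unique[OF d1 d2[folded IH]] .
  have pm: "(z+e) * (of_nat m * (z+e)^(m-1) * poly (PP n m) z) = of_nat m * ((z+e)^m * poly (PP n m) z)"
    by (cases m) (simp_all add: algebra_simps)
  have "(z+e)^(Suc m) * poly (PP n (Suc m)) z
      = (z+e) * (cm n e m * (poly (pderiv (U n e m)) ((z-e)/2) * (1/2))) - of_nat m * ((z+e)^m * poly (PP n m) z)"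
    unfolding eq[symmetric] distrib_left pm by (simp add: algebra_simps)
  also have "\<dots> = cm n e m * (((z-e)/2) * poly (pderiv (U n e m)) ((z-e)/2) + e * poly (pderiv (U n e m)) ((z-e)/2)
      - of_nat m * poly (U n e m) ((z-e)/2))"
    unfolding Suc.IH[OF less_imp_le[OF mn]] by (simp add: field_simps)
  also have "\<dots> = cm n e m * poly (pCons 0 (pderiv (U n e m)) + smult e (pderiv (U n e m)) - smult (of_nat m) (U n e m)) ((z-e)/2)"
    by simp
  also have "\<dots> = cm n e (Suc m) * poly (U n e (Suc m)) ((z-e)/2)"
    unfolding UG_poly[OF e2 mn] cm_Suc[OF mn] by simp
  finally show ?case .
qed



definition q3c :: "nat \<Rightarrow> complex \<Rightarrow> nat \<Rightarrow> nat \<Rightarrow> complex" where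
  "q3c n e m k = e^k * fact (k + n + m) / (fact k * fact (k + m) * fact (n - m - k))
        * (2 * Digamma (of_nat (k + n + m + 1)) - Digamma (of_nat (k + m + 1)))"

definition Q3 :: "nat \<Rightarrow> complex \<Rightarrow> nat \<Rightarrow> complex poly" where
  "Q3 n e m = mk (n - m) (q3c n e m)"

lemma Q3_deriv:
  assumes mn: "m < n"
  shows "pderiv (Q3 n e m) = smult e (Q3 n e (Suc m))"
proof (intro poly_eqI)
  fix k
  have c: "(Suc k \<le> n - m) = (k \<le> n - Suc m)" using mn by auto
  have q: "of_nat (Suc k) * q3c n e m (Suc k) = e * q3c n e (Suc m) k"
  proof -
    have i: "Suc k + n + m = k + n + Suc m" "Suc k + m = k + Suc m" "n - m - Suc k = n - Suc m - k" by auto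
    have key: "K1 * (e^(Suc k) * F / ((K1 * Fk) * G * H) * P) = e * (e^k * F/(Fk*G*H)*P)"
      if "K1 \<noteq> 0" "Fk \<noteq> 0" "G \<noteq> 0" "H \<noteq> 0" for K1 Fk F G H P :: complex
      using that by (simp add: field_simps)
    show ?thesis unfolding q3c_def i fact_Suc[of k] by (rule key) (simp_all del: of_nat_Suc)
  qed
  show "coeff (pderiv (Q3 n e m)) k = coeff (smult e (Q3 n e (Suc m))) k"
    unfolding coeff_pderiv coeff_smult Q3_def coeff_mk c using q by simp
qed

definition sc :: "nat \<Rightarrow> complex \<Rightarrow> nat \<Rightarrow> nat \<Rightarrow> complex" where
  "sc n e m k = uc n e m k * (2 * Digamma (of_nat (k + n + 1)) - Digamma (of_nat (k + m + 1)))"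

definition S :: "nat \<Rightarrow> complex \<Rightarrow> nat \<Rightarrow> complex poly" where
  "S n e m = mk n (sc n e m)"

lemma ST_poly:
  assumes e2: "e*e = 1" and mn: "m < n"
  shows "U n e m + (pCons 0 (pderiv (S n e m)) + smult e (pderiv (S n e m)) - smult (of_nat m) (S n e m))
    = smult (of_nat (2*n+1)) (U n e (Suc m)) + smult (of_nat ((n+m+1)*(n-m))) (S n e (Suc m))"
proof (intro poly_eqI)
  fix k
  have c0: "coeff (pCons 0 (pderiv (S n e m))) k = of_nat k * coeff (S n e m) k"
    by (cases k) (simp_all add: coeff_pderiv)
  define A where "A = Digamma (of_nat (k + n + 1) :: complex)"
  define B where "B = Digamma (of_nat (k + m + 1) :: complex)"
  have dA: "Digamma (of_nat (Suc k + n + 1) :: complex) = A + 1/(of_nat k + of_nat n + 1)"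
  proof -
    have i: "Suc k + n + 1 = Suc (Suc (k+n))" "k + n + 1 = Suc (k+n)" by simp_all
    show ?thesis unfolding A_def i Dg_Suc by simp
  qed
  have dB: "Digamma (of_nat (Suc k + m + 1) :: complex) = B + 1/(of_nat k + of_nat m + 1)"
  proof -
    have i: "Suc k + m + 1 = Suc (Suc (k+m))" "k + m + 1 = Suc (k+m)" by simp_all
    show ?thesis unfolding B_def i Dg_Suc by simp
  qed
  have dB': "Digamma (of_nat (k + Suc m + 1) :: complex) = B + 1/(of_nat k + of_nat m + 1)"
  proof -
    have i: "k + Suc m + 1 = Suc (Suc (k+m))" "k + m + 1 = Suc (k+m)" by simp_all
    show ?thesis unfolding B_def i Dg_Suc by simp
  qed
  have ee: "e * (e * w) = w" for w using e2 by (metis mult.assoc mult_1)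
  show "coeff (U n e m + (pCons 0 (pderiv (S n e m)) + smult e (pderiv (S n e m)) - smult (of_nat m) (S n e m))) k
      = coeff (smult (of_nat (2*n+1)) (U n e (Suc m)) + smult (of_nat ((n+m+1)*(n-m))) (S n e (Suc m))) k"
  proof (cases "k < n")
    case True
    have lhs: "coeff (U n e m + (pCons 0 (pderiv (S n e m)) + smult e (pderiv (S n e m)) - smult (of_nat m) (S n e m))) k
      = uc n e m k + of_nat k * (uc n e m k * (2*A - B)) + e * (of_nat k + 1) * (uc n e m (Suc k) *
          (2 * Digamma (of_nat (Suc k + n + 1)) - Digamma (of_nat (Suc k + m + 1)))) - of_nat m * (uc n e m k * (2*A - B))"
      unfolding coeff_add coeff_diff coeff_smult c0 unfolding coeff_pderiv S_def U_def coeff_mk sc_def A_def B_def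
      using True by (simp add: algebra_simps)
    have rhs: "coeff (smult (of_nat (2*n+1)) (U n e (Suc m)) + smult (of_nat ((n+m+1)*(n-m))) (S n e (Suc m))) k
      = (2 * of_nat n + 1) * (uc n e m k / (of_nat k + of_nat m + 1)) + (of_nat n + of_nat m + 1) * (of_nat n - of_nat m)
         * ((uc n e m k / (of_nat k + of_nat m + 1)) * (2 * A - Digamma (of_nat (k + Suc m + 1))))"
      unfolding coeff_add coeff_smult S_def U_def coeff_mk sc_def uc_Sucm A_def using True mn
      by (simp add: of_nat_diff) (simp add: algebra_simps)
    have u1: "uc n e m (Suc k) = e * uc n e m k * (of_nat n - of_nat k) * (of_nat k + of_nat n + 1) / ((of_nat k + 1) * (of_nat k + of_nat m + 1))"
      unfolding uc_Suc[OF True] using True by (simp add: of_nat_diff ac_simps)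
    have k0: "u + K*(u*(2*A-B)) + e*D1*((e*u*(N-K)*D3/(D1*D2)) * (2*(A + 1/D3) - (B + 1/D2))) - M*(u*(2*A-B))
        = (2*N+1)*(u/D2) + (N+M+1)*(N-M)*((u/D2)*(2*A - (B + 1/D2)))"
      if "D1 \<noteq> 0" "D2 \<noteq> 0" "D3 \<noteq> 0" "K = D1 - 1" "M = D2 - D1" "N = D3 - D1" for D1 D2 D3 K M N u :: complex
      using that(1-3) unfolding that(4-6) by (simp add: field_simps ee)
    show ?thesis unfolding lhs rhs u1 dA dB dB'
      using k0[of "of_nat k + 1" "of_nat k + of_nat m + 1" "of_nat k + of_nat n + 1" "of_nat k" "of_nat m" "of_nat n" "uc n e m k"]
      by simp
  next
    case False
    show ?thesis
    proof (cases "k = n")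
      case True
      have lhs: "coeff (U n e m + (pCons 0 (pderiv (S n e m)) + smult e (pderiv (S n e m)) - smult (of_nat m) (S n e m))) k
        = uc n e m n + of_nat n * (uc n e m n * (2*A - B)) - of_nat m * (uc n e m n * (2*A - B))"
        unfolding coeff_add coeff_diff coeff_smult c0 unfolding coeff_pderiv S_def U_def coeff_mk sc_def A_def B_def
        using True by (simp add: algebra_simps)
      have rhs: "coeff (smult (of_nat (2*n+1)) (U n e (Suc m)) + smult (of_nat ((n+m+1)*(n-m))) (S n e (Suc m))) k
        = (2 * of_nat n + 1) * (uc n e m n / (of_nat n + of_nat m + 1)) + (of_nat n + of_nat m + 1) * (of_nat n - of_nat m)
           * ((uc n e m n / (of_nat n + of_nat m + 1)) * (2 * A - Digamma (of_nat (k + Suc m + 1))))"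
        unfolding coeff_add coeff_smult S_def U_def coeff_mk sc_def uc_Sucm A_def
        by (simp only: True le_refl if_True of_nat_mult of_nat_add of_nat_1 of_nat_diff[OF less_imp_le[OF mn]]
            of_nat_numeral)
      have k0: "u + N*(u*(2*A-B)) - M*(u*(2*A-B))
          = (2*N+1)*(u/D2) + (N+M+1)*(N-M)*((u/D2)*(2*A - (B + 1/D2)))"
        if "D2 \<noteq> 0" "M = D2 - N - 1" for D2 M N u :: complex
        using that(1) unfolding that(2) by (simp add: field_simps)
      show ?thesis unfolding lhs rhs dB' using True
        using k0[of "of_nat n + of_nat m + 1" "of_nat m" "of_nat n" "uc n e m n"] by simp
    next
      case False
      then have "k > n" using \<open>\<not> k < n\<close> by simp
      then show ?thesis
        unfolding coeff_add coeff_diff coeff_smult c0 unfolding coeff_pderiv S_def U_def coeff_mk by simp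
    qed
  qed
qed



definition R :: "nat \<Rightarrow> complex \<Rightarrow> nat \<Rightarrow> complex \<Rightarrow> complex" where
  "R n e m z = poly (PP n m) z * Ln (z + e)
    + (Digamma (of_nat (n + m + 1)) - Digamma (of_nat (n - m + 1))) * poly (PP n m) z
    - e^(n+m) / 2^m * poly (Q3 n e m) ((z-e)/2)
    + cm n e m * inverse ((z+e)^m) * poly (S n e m) ((z-e)/2)"

lemma dpoly: "((\<lambda>z. poly (Q::complex poly) ((z-e)/2)) has_field_derivative poly (pderiv Q) ((z-e)/2) / 2) (at z)"
proof -
  have "((\<lambda>z::complex. (z-e)/2) has_field_derivative 1/2) (at z)"
    by (auto intro!: derivative_eq_intros)
  from DERIV_chain2[OF poly_DERIV this] show ?thesis by simp
qed

lemma dinvpow: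
  fixes z e :: complex
  assumes nz: "z + e \<noteq> 0"
  shows "((\<lambda>z. inverse ((z+e)^m)) has_field_derivative - of_nat m * inverse ((z+e)^Suc m)) (at z)"
proof -
  have p: "((\<lambda>z. (z+e)^m) has_field_derivative of_nat m * (z+e)^(m-1)) (at z)"
    by (auto intro!: derivative_eq_intros)
  have "((\<lambda>z. inverse ((z+e)^m)) has_field_derivative -(of_nat m * (z+e)^(m-1) * inverse (((z+e)^m)^Suc (Suc 0)))) (at z)"
    using DERIV_inverse_fun[OF p] nz by simp
  then show ?thesis
  proof (rule DERIV_cong)
    show "-(of_nat m * (z+e)^(m-1) * inverse (((z+e)^m)^Suc (Suc 0))) = - of_nat m * inverse ((z+e)^Suc m)"
    proof (cases m)
      case 0 then show ?thesis by simp
    next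
      case (Suc k)
      have pw: "((z+e)^Suc k)^Suc (Suc 0) = (z+e)^k * (z+e)^Suc (Suc k)"
        by (simp flip: power_add power_mult)
      have W: "(z+e)^k \<noteq> 0" "(z+e)^Suc (Suc k) \<noteq> 0" using nz by simp_all
      have key: "-(a * W * inverse (W * V)) = - a * inverse V" if "W \<noteq> 0" "V \<noteq> 0" for a W V :: complex
        using that by (simp add: field_simps)
      have sk: "Suc k - 1 = k" by simp
      show ?thesis unfolding Suc pw sk by (rule key) (use W in auto)
    qed
  qed
qed

lemma dLn:
  assumes "z + e \<notin> \<real>\<^sub>\<le>\<^sub>0"
  shows "((\<lambda>z. Ln (z + e)) has_field_derivative inverse (z+e)) (at z)"
proof -
  have "((\<lambda>z::complex. z + e) has_field_derivative 1) (at z)" by (auto intro!: derivative_eq_intros)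
  from DERIV_chain2[OF has_field_derivative_Ln[OF assms] this] show ?thesis by simp
qed

lemma R_deriv0:
  assumes "z + e \<notin> \<real>\<^sub>\<le>\<^sub>0"
  shows "(R n e m has_field_derivative
      (poly (PP n (Suc m)) z * Ln (z + e) + inverse (z+e) * poly (PP n m) z)
    + (Digamma (of_nat (n + m + 1)) - Digamma (of_nat (n - m + 1))) * poly (PP n (Suc m)) z
    - e^(n+m) / 2^m * (poly (pderiv (Q3 n e m)) ((z-e)/2) / 2)
    + ((cm n e m * (- of_nat m * inverse ((z+e)^Suc m))) * poly (S n e m) ((z-e)/2)
        + (poly (pderiv (S n e m)) ((z-e)/2) / 2) * (cm n e m * inverse ((z+e)^m)))) (at z)"
proof -
  have nz: "z + e \<noteq> 0" using assms by auto
  have f1: "((\<lambda>z. poly (PP n m) z) has_field_derivative poly (PP n (Suc m)) z) (at z)"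
    unfolding PP_Suc by (rule poly_DERIV)
  have Rl: "R n e m = (\<lambda>z. poly (PP n m) z * Ln (z + e)
    + (Digamma (of_nat (n + m + 1)) - Digamma (of_nat (n - m + 1))) * poly (PP n m) z
    - e^(n+m) / 2^m * poly (Q3 n e m) ((z-e)/2)
    + cm n e m * inverse ((z+e)^m) * poly (S n e m) ((z-e)/2))"
    by (rule ext) (simp add: R_def)
  show ?thesis unfolding Rl
    by (intro DERIV_add DERIV_diff DERIV_mult DERIV_cmult f1 dLn[OF assms] dpoly dinvpow[OF nz])
qed

lemma hh_Suc:
  assumes mn: "m < n"
  shows "Digamma (of_nat (n + Suc m + 1)) - Digamma (of_nat (n - Suc m + 1)) =
    (Digamma (of_nat (n+m+1)) - Digamma (of_nat (n - m + 1)) :: complex) + 1/(of_nat n + of_nat m + 1) + 1/(of_nat n - of_nat m)"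
proof -
  have i: "n + Suc m + 1 = Suc (Suc (n+m))" "n + m + 1 = Suc (n+m)" "n - m + 1 = Suc (Suc (n - Suc m))"
    "n - Suc m + 1 = Suc (n - Suc m)" using mn by auto
  have o: "(of_nat (Suc (n - Suc m)) :: complex) = of_nat n - of_nat m" using mn by (simp add: of_nat_diff)
  show ?thesis unfolding i Dg_Suc o by simp
qed

lemma R_step:
  assumes z: "z + e \<notin> \<real>\<^sub>\<le>\<^sub>0" and e2: "e*e = 1" and mn: "m < n"
  shows "(R n e m has_field_derivative R n e (Suc m) z) (at z)"
proof (rule DERIV_cong[OF R_deriv0[OF z]])
  have nz: "z + e \<noteq> 0" using z by auto
  have ee: "e * (e * w) = w" for w using e2 by (metis mult.assoc mult_1)
  define x where "x = (z-e)/2"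
  define a :: complex where "a = of_nat n + of_nat m + 1"
  define b :: complex where "b = of_nat n - of_nat m"
  have a0: "a \<noteq> 0" unfolding a_def by simp
  have b0: "b \<noteq> 0" unfolding b_def using mn by simp
  have cab: "(of_nat ((n+m+1)*(n-m)) :: complex) = a * b" unfolding a_def b_def using mn by (simp add: of_nat_diff) (simp add: algebra_simps)
  have n21: "(of_nat (2*n+1) :: complex) = a + b" unfolding a_def b_def by simp
  have W0: "(z+e)^m \<noteq> 0" using nz by simp
  have g0: "poly (PP n m) z = cm n e m * poly (U n e m) x / (z+e)^m"
    using G[OF e2, of m n z] mn W0 unfolding x_def by (simp add: field_simps)
  have g1: "poly (PP n (Suc m)) z = cm n e m * (a*b) * poly (U n e (Suc m)) x / ((z+e) * (z+e)^m)"
  proof -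
    have h: "((z+e)*(z+e)^m) * poly (PP n (Suc m)) z = cm n e m * (a*b) * poly (U n e (Suc m)) x"
      using G[OF e2, of "Suc m" n z] mn unfolding x_def cm_Suc[OF mn] cab power_Suc by simp
    have "(z+e)*(z+e)^m \<noteq> 0" using nz W0 by simp
    then show ?thesis using h by (simp add: eq_divide_eq ac_simps)
  qed
  have st0: "poly (U n e m + (pCons 0 (pderiv (S n e m)) + smult e (pderiv (S n e m)) - smult (of_nat m) (S n e m))) x
    = poly (smult (of_nat (2*n+1)) (U n e (Suc m)) + smult (of_nat ((n+m+1)*(n-m))) (S n e (Suc m))) x"
    unfolding ST_poly[OF e2 mn] ..
  have st: "poly (U n e m) x = (a+b) * poly (U n e (Suc m)) x + (a*b) * poly (S n e (Suc m)) x
     - (x * poly (pderiv (S n e m)) x + e * poly (pderiv (S n e m)) x - of_nat m * poly (S n e m) x)"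
    using st0 unfolding cab n21 by (simp add: algebra_simps)
  have q3: "poly (pderiv (Q3 n e m)) x = e * poly (Q3 n e (Suc m)) x"
    unfolding Q3_deriv[OF mn] by simp
  have T0: "(2::complex)^m \<noteq> 0" by simp
  have xw: "x = (z+e)/2 - e" unfolding x_def by (simp add: field_simps)
  have key: "P1*L + inverse w*P0 + hh0*P1 - E/T*(e*Q1/2) + (cm*(-M*inverse(w*W)))*S + (S'/2)*(cm*inverse W)
     = P1*L + hh1*P1 - (e*E)/(2*T)*Q1 + (cm*(a*b))*inverse(w*W)*S1"
    if "w \<noteq> 0" "W \<noteq> 0" "T \<noteq> 0" "P0 = cm*Um/W" "P1 = cm*(a*b)*U1/(w*W)"
       "Um = (a+b)*U1 + (a*b)*S1 - (x*S' + e*S' - M*S)" "x = w/2 - e" "hh1 = hh0 + 1/a + 1/b"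
    for P0 P1 L w hh0 hh1 E T Q1 cm M W S S' S1 Um U1 x
    using that(1-3) a0 b0 unfolding that(4-8) by (simp add: field_simps ee)
  show "(poly (PP n (Suc m)) z * Ln (z + e) + inverse (z+e) * poly (PP n m) z)
    + (Digamma (of_nat (n + m + 1)) - Digamma (of_nat (n - m + 1))) * poly (PP n (Suc m)) z
    - e^(n+m) / 2^m * (poly (pderiv (Q3 n e m)) ((z-e)/2) / 2)
    + ((cm n e m * (- of_nat m * inverse ((z+e)^Suc m))) * poly (S n e m) ((z-e)/2)
        + (poly (pderiv (S n e m)) ((z-e)/2) / 2) * (cm n e m * inverse ((z+e)^m))) = R n e (Suc m) z"
    unfolding R_def x_def[symmetric] q3 hh_Suc[OF mn] cm_Suc[OF mn] cab power_Suc
      a_def[symmetric] b_def[symmetric]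
    using key[OF nz W0 T0 g0 g1 st xw refl] by (simp add: algebra_simps)
qed



definition Om :: "complex set" where "Om = {w. Im w \<noteq> 0} \<union> {w. 1 < Re w}"

lemma open_Om: "open Om"
  unfolding Om_def
  by (intro open_Un open_Collect_neq open_Collect_less continuous_intros)

lemma Om_iff: "z \<in> Om \<longleftrightarrow> z \<notin> complex_of_real ` {..1}"
proof
  assume "z \<in> Om"
  then show "z \<notin> complex_of_real ` {..1}" unfolding Om_def by auto
next
  assume a: "z \<notin> complex_of_real ` {..1}"
  show "z \<in> Om"
  proof (rule ccontr)
    assume "z \<notin> Om"
    then have "Im z = 0" "Re z \<le> 1" unfolding Om_def by auto
    then have "z = complex_of_real (Re z)" by (simp add: complex_eq_iff)
    with a \<open>Re z \<le> 1\<close> show False by auto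
  qed
qed

lemma Om_Ln:
  assumes "z \<in> Om" "e = 1 \<or> e = -1"
  shows "z + e \<notin> \<real>\<^sub>\<le>\<^sub>0"
  using assms unfolding Om_def complex_nonpos_Reals_iff by auto

lemma main_ind:
  assumes e: "e = 1 \<or> e = -1"
  shows "m \<le> n \<Longrightarrow> z \<in> Om \<Longrightarrow> (deriv ^^ m) (\<lambda>w. legendreP n w * Ln (w + e)) z = R n e m z"
proof (induction m arbitrary: z)
  case 0
  have "Q3 n e 0 = S n e 0"
    unfolding Q3_def S_def q3c_def sc_def uc_def by simp
  then show ?case unfolding R_def PP_def cm_def by (simp add: poly_Lp)
next
  case (Suc m)
  have e2: "e * e = 1" using e by auto
  have ev: "eventually (\<lambda>w. (deriv ^^ m) (\<lambda>w. legendreP n w * Ln (w + e)) w = R n e m w) (nhds z)"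
    using eventually_nhds_in_open[OF open_Om Suc.prems(2)]
    by eventually_elim (use Suc in auto)
  have "(deriv ^^ Suc m) (\<lambda>w. legendreP n w * Ln (w + e)) z = deriv ((deriv ^^ m) (\<lambda>w. legendreP n w * Ln (w + e))) z"
    by simp
  also have "\<dots> = deriv (R n e m) z"
    by (rule deriv_cong_ev[OF ev refl])
  also have "\<dots> = R n e (Suc m) z"
    by (rule DERIV_imp_deriv[OF R_step[OF Om_Ln[OF Suc.prems(2) e] e2]]) (use Suc.prems in simp)
  finally show ?case .
qed

theorem mainTheorem3:
  fixes m n :: nat and e z :: complex
  assumes "m \<le> n"
    and "e = 1 \<or> e = -1"
    and "z \<notin> complex_of_real ` {..1}"
  shows "(deriv ^^ m) (\<lambda>w. legendreP n w * Ln (w + e)) z =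
      fact (2*m) / (2^m * fact m) * gegenbauerC (n - m) (of_nat m + 1/2) z * Ln (z + e)
    + fact (2*m) / (2^m * fact m)
        * (Digamma (of_nat (n + m + 1)) - Digamma (of_nat (n - m + 1)))
        * gegenbauerC (n - m) (of_nat m + 1/2) z
    - e^(n + m) / 2^m * (\<Sum>k=0..n-m. e^k * fact (k + n + m) / (fact k * fact (k + m) * fact (n - m - k))
        * (2 * Digamma (of_nat (k + n + m + 1)) - Digamma (of_nat (k + m + 1))) * ((z - e) / 2)^k)
    + e^n * fact (n + m) / fact (n - m) * inverse ((z + e)^m)
        * (\<Sum>k=0..n. e^k * fact (k + n) / (fact k * fact (k + m) * fact (n - k))
        * (2 * Digamma (of_nat (k + n + 1)) - Digamma (of_nat (k + m + 1))) * ((z - e) / 2)^k)"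
proof -
  have z: "z \<in> Om" using assms(3) Om_iff by simp
  have "(deriv ^^ m) (\<lambda>w. legendreP n w * Ln (w + e)) z = R n e m z"
    by (rule main_ind[OF assms(2) assms(1) z])
  also have "\<dots> = fact (2*m) / (2^m * fact m) * gegenbauerC (n - m) (of_nat m + 1/2) z * Ln (z + e)
    + fact (2*m) / (2^m * fact m)
        * (Digamma (of_nat (n + m + 1)) - Digamma (of_nat (n - m + 1)))
        * gegenbauerC (n - m) (of_nat m + 1/2) z
    - e^(n + m) / 2^m * (\<Sum>k=0..n-m. e^k * fact (k + n + m) / (fact k * fact (k + m) * fact (n - m - k))
        * (2 * Digamma (of_nat (k + n + m + 1)) - Digamma (of_nat (k + m + 1))) * ((z - e) / 2)^k)
    + e^n * fact (n + m) / fact (n - m) * inverse ((z + e)^m)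
        * (\<Sum>k=0..n. e^k * fact (k + n) / (fact k * fact (k + m) * fact (n - k))
        * (2 * Digamma (of_nat (k + n + 1)) - Digamma (of_nat (k + m + 1))) * ((z - e) / 2)^k)"
    unfolding R_def PP_def F3[OF assms(1)] Q3_def S_def poly_mk cm_def sc_def uc_def q3c_def atLeast0AtMost
    by (simp add: mult_ac)
  finally show ?thesis .
qed

end
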